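(* Let $m\ge1$, let $p_1,\dots,p_m\ge 0$ with $p_1+\cdots+p_m=1$, let $S$ be a finite nonempty word on $[m]$ all of whose letters have positive probability, and let $S'$ be the reversal of $S$. For a die showing face $i$ with probability $p_i$ rolled independently, let $E(W)$ denote the expected number of rolls until the word $W$ first appears as a block of consecutive outcomes. Then $E(S')=E(S)$. *)

theory Defs
  imports "HOL-Probability.Probability"
begin

definition appears_at :: "'a list \<Rightarrow> 'a stream \<Rightarrow> nat \<Rightarrow> bool" where
  "appears_at W \<omega> n \<longleftrightarrow> length W \<le> n \<and> drop (n - length W) (stake n \<omega>) = W"

definition waiting_time :: "'a list \<Rightarrow> 'a stream \<Rightarrow> enat" where
  "waiting_time W \<omega> =
     (if \<exists>n. appears_at W \<omega> n then enat (LEAST n. appears_at W \<omega> n) else \<infinity>)"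

definition expected_wait :: "'a pmf \<Rightarrow> 'a list \<Rightarrow> ennreal" where
  "expected_wait D W =
     (\<integral>\<^sup>+ \<omega>. ennreal_of_enat (waiting_time W \<omega>) \<partial>stream_space (measure_pmf D))"

end

theory Submission
  imports Defs "HOL-Library.Sublist"
begin

lemma meas_stake:
  fixes f :: "'a::countable list \<Rightarrow> ennreal"
  shows "(\<lambda>\<omega>. f (stake n \<omega>)) \<in> borel_measurable (stream_space (measure_pmf D))"
proof -
  have "sets (stream_space (measure_pmf D)) = sets (stream_space (count_space UNIV))"
    by (rule sets_stream_space_cong) simp
  moreover have "(\<lambda>\<omega>. f (stake n \<omega>)) \<in> borel_measurable (stream_space (count_space (UNIV::'a set)))"
    by (rule measurable_compose[OF measurable_stake]) simp
  ultimately show ?thesis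
    using measurable_cong_sets by blast
qed

lemma integral_stake:
  fixes f :: "'a::countable list \<Rightarrow> ennreal"
  shows "(\<integral>\<^sup>+\<omega>. f (stake n \<omega>) \<partial>stream_space (measure_pmf D)) = (\<integral>\<^sup>+xs. f xs \<partial>replicate_pmf n D)"
proof (induction n arbitrary: f)
  case 0
  interpret S: prob_space "stream_space (measure_pmf D)"
    by (rule prob_space.prob_space_stream_space) (rule prob_space_measure_pmf)
  show ?case by (simp add: S.emeasure_space_1)
next
  case (Suc n)
  have "(\<integral>\<^sup>+\<omega>. f (stake (Suc n) \<omega>) \<partial>stream_space (measure_pmf D))
      = (\<integral>\<^sup>+x. (\<integral>\<^sup>+X. f (stake (Suc n) (x ## X)) \<partial>stream_space (measure_pmf D)) \<partial>measure_pmf D)"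
    by (rule prob_space.nn_integral_stream_space[OF prob_space_measure_pmf meas_stake])
  also have "\<dots> = (\<integral>\<^sup>+x. (\<integral>\<^sup>+xs. f (x # xs) \<partial>replicate_pmf n D) \<partial>measure_pmf D)"
    using Suc[of "\<lambda>xs. f (_ # xs)"] by simp
  also have "\<dots> = (\<integral>\<^sup>+xs. f xs \<partial>replicate_pmf (Suc n) D)"
    by simp
  finally show ?case .
qed

lemma rev_replicate_pmf: "map_pmf rev (replicate_pmf n D) = replicate_pmf n D"
proof (induction n)
  case 0
  then show ?case by simp
next
  case (Suc n)
  have A: "replicate_pmf (Suc n) D = do {xs \<leftarrow> replicate_pmf n D; x \<leftarrow> D; return_pmf (xs @ [x])}"
    using replicate_pmf_distrib[of n 1 D]
    by (simp add: bind_return_pmf bind_assoc_pmf)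
  have "map_pmf rev (replicate_pmf (Suc n) D) = do {x \<leftarrow> D; xs \<leftarrow> replicate_pmf n D; return_pmf (rev xs @ [x])}"
    by (simp add: map_pmf_def bind_assoc_pmf bind_return_pmf)
  also have "\<dots> = do {x \<leftarrow> D; xs \<leftarrow> map_pmf rev (replicate_pmf n D); return_pmf (xs @ [x])}"
    by (simp add: map_pmf_def bind_assoc_pmf bind_return_pmf)
  also have "\<dots> = do {x \<leftarrow> D; xs \<leftarrow> replicate_pmf n D; return_pmf (xs @ [x])}"
    using Suc by simp
  also have "\<dots> = replicate_pmf (Suc n) D"
    unfolding A by (rule bind_commute_pmf)
  finally show ?case .
qed

lemma appears_sublist:
  "(\<exists>k\<le>n. appears_at W \<omega> k) \<longleftrightarrow> sublist W (stake n \<omega>)"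
proof
  assume "\<exists>k\<le>n. appears_at W \<omega> k"
  then obtain k where k: "k \<le> n" "length W \<le> k" "drop (k - length W) (stake k \<omega>) = W"
    unfolding appears_at_def by blast
  have "stake n \<omega> = stake k \<omega> @ stake (n - k) (sdrop k \<omega>)"
    using k(1) by (metis le_add_diff_inverse stake_add)
  also have "stake k \<omega> = take (k - length W) (stake k \<omega>) @ W"
    using k(3) by (metis append_take_drop_id)
  finally show "sublist W (stake n \<omega>)"
    unfolding sublist_def by auto
next
  assume "sublist W (stake n \<omega>)"
  then obtain ps ss where e: "stake n \<omega> = ps @ W @ ss" unfolding sublist_def by blast
  define k where "k = length ps + length W"
  have kn: "k \<le> n" using arg_cong[OF e, of length] unfolding k_def by simp
  have "stake k \<omega> = take k (stake n \<omega>)" using kn by (simp add: take_stake min_def)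
  also have "\<dots> = ps @ W" using e unfolding k_def by simp
  finally have "appears_at W \<omega> k" unfolding appears_at_def k_def by simp
  with kn show "\<exists>k\<le>n. appears_at W \<omega> k" by blast
qed

lemma less_wait: "enat n < waiting_time W \<omega> \<longleftrightarrow> \<not> sublist W (stake n \<omega>)"
proof -
  have "enat n < waiting_time W \<omega> \<longleftrightarrow> \<not> (\<exists>k\<le>n. appears_at W \<omega> k)"
  proof (cases "\<exists>n. appears_at W \<omega> n")
    case True
    have "enat n < enat (LEAST n. appears_at W \<omega> n) \<longleftrightarrow> \<not> (\<exists>k\<le>n. appears_at W \<omega> k)"
    proof
      assume "enat n < enat (LEAST n. appears_at W \<omega> n)"
      then show "\<not> (\<exists>k\<le>n. appears_at W \<omega> k)"
        by (metis enat_ord_simps(2) le_less_trans not_less_Least)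
    next
      assume a: "\<not> (\<exists>k\<le>n. appears_at W \<omega> k)"
      have "appears_at W \<omega> (LEAST n. appears_at W \<omega> n)" using True by (rule LeastI_ex)
      with a show "enat n < enat (LEAST n. appears_at W \<omega> n)" by (meson enat_ord_simps(2) not_le)
    qed
    then show ?thesis using True unfolding waiting_time_def by simp
  next
    case False
    then show ?thesis unfolding waiting_time_def by auto
  qed
  then show ?thesis using appears_sublist by blast
qed

lemma enat_sum: "ennreal_of_enat t = (\<Sum>n. if enat n < t then 1 else 0)"
proof (cases t)
  case (enat m)
  have "(\<Sum>n. (if enat n < t then 1 else 0::ennreal)) = (\<Sum>n<m. (if enat n < t then 1 else 0))"
    by (rule suminf_finite) (auto simp: enat)
  also have "\<dots> = of_nat m" by (simp add: enat)
  finally show ?thesis by (simp add: enat)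
next
  case infinity
  have ns: "\<not> summable (\<lambda>_::nat. 1::real)"
  proof
    assume "summable (\<lambda>_::nat. 1::real)"
    then have "(\<lambda>_::nat. 1::real) \<longlonglongrightarrow> 0" by (rule summable_LIMSEQ_zero)
    then show False using LIMSEQ_unique[OF tendsto_const] by fastforce
  qed
  have "(\<Sum>i::nat. ennreal 1) = top"
    by (rule summable_iff_suminf_neq_top[OF _ ns]) simp
  then show ?thesis using infinity by simp
qed

lemma expected_wait_sum:
  fixes W :: "'a::countable list"
  shows
  "expected_wait D W = (\<Sum>n. \<integral>\<^sup>+xs. indicator {xs. \<not> sublist W xs} xs \<partial>replicate_pmf n D)"
proof -
  have "expected_wait D W = (\<integral>\<^sup>+\<omega>. (\<Sum>n. indicator {xs. \<not> sublist W xs} (stake n \<omega>)) \<partial>stream_space (measure_pmf D))"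
    unfolding expected_wait_def
    by (intro nn_integral_cong) (simp add: enat_sum less_wait indicator_def of_bool_def)
  also have "\<dots> = (\<Sum>n. \<integral>\<^sup>+\<omega>. indicator {xs. \<not> sublist W xs} (stake n \<omega>) \<partial>stream_space (measure_pmf D))"
    by (rule nn_integral_suminf) (rule meas_stake)
  also have "\<dots> = (\<Sum>n. \<integral>\<^sup>+xs. indicator {xs. \<not> sublist W xs} xs \<partial>replicate_pmf n D)"
    by (simp add: integral_stake)
  finally show ?thesis .
qed

lemma expected_wait_rev:
  fixes W :: "'a::countable list"
  shows "expected_wait D (rev W) = expected_wait D W"
proof -
  have "(\<integral>\<^sup>+xs. indicator {xs. \<not> sublist (rev W) xs} xs \<partial>replicate_pmf n D)
      = (\<integral>\<^sup>+xs. indicator {xs. \<not> sublist W xs} xs \<partial>replicate_pmf n D)" for n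
  proof -
    have "(\<integral>\<^sup>+xs. indicator {xs. \<not> sublist W xs} xs \<partial>replicate_pmf n D)
       = (\<integral>\<^sup>+xs. indicator {xs. \<not> sublist W xs} xs \<partial>map_pmf rev (replicate_pmf n D))"
      by (simp add: rev_replicate_pmf)
    also have "\<dots> = (\<integral>\<^sup>+xs. indicator {xs. \<not> sublist (rev W) xs} xs \<partial>replicate_pmf n D)"
      by (simp add: indicator_def sublist_rev_right)
    finally show ?thesis by simp
  qed
  then show ?thesis by (simp add: expected_wait_sum)
qed

theorem corollary4p4:
  fixes m :: nat and D :: "nat pmf" and S :: "nat list"
  assumes "m \<ge> 1"
    and "set_pmf D \<subseteq> {1..m}"
    and "S \<noteq> []"
    and "\<forall>x\<in>set S. x \<in> {1..m} \<and> pmf D x > 0"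
  shows "expected_wait D (rev S) = expected_wait D S"
  by (rule expected_wait_rev)

end
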